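(* Let $d\ge 2$, let $\mu$ be a Borel probability measure on $S^{d-1}$, and let $2\le \ell\le d$ be an integer. Then \[ \mu^{\otimes \ell}\bigl(\{(u_1,\dots,u_\ell)\in (S^{d-1})^\ell : u_i\perp u_j \text{ for all } i\ne j\}\bigr)\le \frac{d!}{(d-\ell)!\, d^{\ell}} . \]
   Context: $S^{d-1}$ is the unit sphere in $\mathbb R^d$. $\mu^{\otimes\ell}$ denotes the $\ell$-fold product measure of $\mu$ with itself on $(S^{d-1})^\ell$; i.e. the probability that $\ell$ independent $\mu$-distributed random unit vectors are pairwise orthogonal. *)

theory Defs
  imports "HOL-Probability.Probability"
begin

end

theory Submission
  imports Defs "HOL-Combinatorics.Permutations"
begin


definition dt :: "nat \<Rightarrow> (nat \<Rightarrow> nat \<Rightarrow> real) \<Rightarrow> real" where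
  "dt n X = (\<Sum>p\<in>{p. p permutes {..<n}}. real_of_int (sign p) * (\<Prod>i<n. X i (p i)))"

lemma dt_identical_rows:
  assumes "a < n" "b < n" "a \<noteq> b" "X a = X b"
  shows "dt n X = 0"
proof -
  let ?t = "Transposition.transpose a b"
  have tp: "?t permutes {..<n}" using assms by (intro permutes_swap_id) auto
  let ?f = "\<lambda>p. real_of_int (sign p) * (\<Prod>i<n. X i (p i))"
  have "dt n X = (\<Sum>p\<in>{p. p permutes {..<n}}. ?f (p \<circ> ?t))"
    unfolding dt_def by (rule sum_permutations_compose_right[OF tp])
  also have "\<dots> = (\<Sum>p\<in>{p. p permutes {..<n}}. - ?f p)"
  proof (rule sum.cong[OF refl])
    fix p assume "p \<in> {p. p permutes {..<n}}"
    then have pp: "p permutes {..<n}" by simp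
    have s: "sign (p \<circ> ?t) = - sign p"
      using sign_compose[of p ?t] permutation_permutes pp tp assms(3)
      by (metis finite_lessThan mult.right_neutral mult_minus_right sign_swap_id)
    have "(\<Prod>i<n. X i ((p \<circ> ?t) i)) = (\<Prod>i<n. X (?t i) (p (?t i)))"
    proof (rule prod.cong[OF refl])
      fix i assume "i \<in> {..<n}"
      show "X i ((p \<circ> ?t) i) = X (?t i) (p (?t i))"
        using assms(4) by (cases "i = a"; cases "i = b") (auto simp: Transposition.transpose_def)
    qed
    also have "\<dots> = (\<Prod>i<n. X i (p i))"
      using prod.permute[OF tp, of "\<lambda>i. X i (p i)"] by (simp add: o_def)
    finally show "?f (p \<circ> ?t) = - ?f p" using s by simp
  qed
  also have "\<dots> = - dt n X" unfolding dt_def by (simp add: sum_negf)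
  finally show ?thesis by simp
qed



definition ff :: "nat \<Rightarrow> nat \<Rightarrow> real" where
  "ff n k = (\<Prod>i<k. (real n - real i))"

definition KK :: "nat set \<Rightarrow> nat \<Rightarrow> (nat \<Rightarrow> nat) set" where
  "KK I n = {k \<in> PiE I (\<lambda>_. {..<n}). inj_on k I}"

definition PP :: "(nat \<Rightarrow> real) \<Rightarrow> nat set \<Rightarrow> nat \<Rightarrow> real" where
  "PP \<alpha> I n = (\<Sum>k\<in>KK I n. \<Prod>i\<in>I. \<alpha> (k i))"

lemma ff_nonneg: "ff n k \<ge> 0"
proof (cases "k \<le> n")
  case True then show ?thesis unfolding ff_def by (intro prod_nonneg) auto
next
  case False
  then have "n \<in> {..<k}" by auto
  then show ?thesis unfolding ff_def by (subst prod_zero) auto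
qed

lemma ff_Suc: "ff n (Suc k) = ff n k * (real n - real k)"
  unfolding ff_def by simp

lemma ff_Suc_Suc: "ff (Suc n) (Suc k) = (real n + 1) * ff n k"
  unfolding ff_def by (subst prod.lessThan_Suc_shift) auto

lemma ff_fact: "k \<le> n \<Longrightarrow> ff n k = fact n / fact (n - k)"
proof (induction k)
  case 0 then show ?case by (simp add: ff_def)
next
  case (Suc k)
  then have "ff n (Suc k) = fact n / fact (n - k) * (real n - real k)" by (simp add: ff_Suc)
  also have "fact (n - k) = (fact (n - Suc k) :: real) * (real n - real k)"
    using Suc.prems by (metis Suc_diff_le Suc_le_lessD diff_Suc_Suc fact_Suc mult.commute of_nat_diff less_imp_le_nat diff_less_Suc)
  finally show ?case using Suc.prems by simp
qed

lemma core_ineq: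
  fixes t M :: real
  assumes "t \<ge> 0" "M \<ge> 0"
  shows "t ^ k * ((real k + 1) * M - real k * t) \<le> M ^ Suc k"
proof (cases "t = 0")
  case True then show ?thesis using assms by (cases k) auto
next
  case False
  then have tp: "t > 0" using assms by simp
  define x where "x = M / t - 1"
  have x: "-1 \<le> x" using assms tp by (simp add: x_def field_simps)
  have "1 + real (Suc k) * x \<le> (1 + x) ^ Suc k" by (rule Bernoulli_inequality[OF x])
  then have "t ^ Suc k * (1 + real (Suc k) * x) \<le> t ^ Suc k * (1 + x) ^ Suc k"
    using tp by (intro mult_left_mono) auto
  also have "t ^ Suc k * (1 + x) ^ Suc k = M ^ Suc k"
    using tp by (simp add: x_def power_mult_distrib[symmetric])
  also have "t ^ Suc k * (1 + real (Suc k) * x) = t ^ k * ((real k + 1) * M - real k * t)"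
    using tp by (simp add: x_def field_simps)
  finally show ?thesis .
qed

lemma step_ineq:
  fixes t a :: real
  assumes "t \<ge> 0" "a \<ge> 0"
  shows "ff n (Suc k) * t ^ Suc k + a * real (Suc k) * (ff n k * t ^ k)
     \<le> ff (Suc n) (Suc k) * ((real n * t + a) / (real n + 1)) ^ Suc k"
proof -
  define M where "M = (real n * t + a) / (real n + 1)"
  have M0: "M \<ge> 0" using assms by (simp add: M_def)
  have eq: "(real n - real k) * t + (real k + 1) * a = (real n + 1) * ((real k + 1) * M - real k * t)"
    by (simp add: M_def field_simps)
  have "ff n (Suc k) * t ^ Suc k + a * real (Suc k) * (ff n k * t ^ k)
      = ff n k * (t ^ k * ((real n - real k) * t + (real k + 1) * a))"
    by (simp add: ff_Suc algebra_simps)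
  also have "\<dots> = ff n k * (real n + 1) * (t ^ k * ((real k + 1) * M - real k * t))"
    by (simp add: eq)
  also have "\<dots> \<le> ff n k * (real n + 1) * M ^ Suc k"
    by (intro mult_left_mono core_ineq assms M0) (use ff_nonneg in auto)
  finally show ?thesis by (simp add: ff_Suc_Suc M_def mult_ac)
qed


lemma KK_Suc:
  assumes "finite I"
  shows "KK I (Suc n) = KK I n \<union> (\<Union>p\<in>I. (\<lambda>k. k(p := n)) ` KK (I - {p}) n)"
proof (intro equalityI subsetI)
  fix k assume k: "k \<in> KK I (Suc n)"
  show "k \<in> KK I n \<union> (\<Union>p\<in>I. (\<lambda>k. k(p := n)) ` KK (I - {p}) n)"
  proof (cases "n \<in> k ` I")
    case False
    then have "k \<in> KK I n" using k unfolding KK_def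
      by (auto simp: PiE_iff less_Suc_eq image_iff)
    then show ?thesis by blast
  next
    case True
    then obtain p where p: "p \<in> I" "k p = n" by auto
    define k' where "k' = k(p := undefined)"
    have "k' \<in> KK (I - {p}) n"
      using k p unfolding KK_def k'_def
      by (auto simp: PiE_iff less_Suc_eq inj_on_def)
    moreover have "k = k'(p := n)" using p by (auto simp: k'_def)
    ultimately show ?thesis using p by blast
  qed
next
  fix k assume "k \<in> KK I n \<union> (\<Union>p\<in>I. (\<lambda>k. k(p := n)) ` KK (I - {p}) n)"
  then show "k \<in> KK I (Suc n)"
  proof
    assume "k \<in> KK I n" then show ?thesis unfolding KK_def by (auto simp: PiE_iff)
  next
    assume "k \<in> (\<Union>p\<in>I. (\<lambda>k. k(p := n)) ` KK (I - {p}) n)"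
    then obtain p k' where p: "p \<in> I" "k' \<in> KK (I - {p}) n" "k = k'(p := n)" by auto
    then show ?thesis unfolding KK_def
      by (auto simp: PiE_iff inj_on_def extensional_def less_Suc_eq split: if_splits)
  qed
qed

lemma PP_Suc:
  assumes "finite I"
  shows "PP \<alpha> I (Suc n) = PP \<alpha> I n + \<alpha> n * (\<Sum>p\<in>I. PP \<alpha> (I - {p}) n)"
proof -
  have fin: "finite (KK J m)" if "finite J" for J m
    unfolding KK_def using that by (intro finite_subset[OF _ finite_PiE[of J "\<lambda>_. {..<m}"]]) auto
  have disj1: "KK I n \<inter> (\<Union>p\<in>I. (\<lambda>k. k(p := n)) ` KK (I - {p}) n) = {}"
    unfolding KK_def by (auto simp: PiE_iff)
  have disj2: "((\<lambda>k. k(p := n)) ` KK (I - {p}) n) \<inter> ((\<lambda>k. k(q := n)) ` KK (I - {q}) n) = {}"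
    if "p \<in> I" "q \<in> I" "p \<noteq> q" for p q
  proof -
    { fix k1 k2 assume "k1 \<in> KK (I - {p}) n" "k2 \<in> KK (I - {q}) n" "k1(p := n) = k2(q := n)"
      then have "(k1(p := n)) q = (k2(q := n)) q" by simp
      then have False using that \<open>k1 \<in> KK (I - {p}) n\<close> unfolding KK_def by (auto simp: PiE_iff) }
    then show ?thesis by blast
  qed
  have inj: "inj_on (\<lambda>k. k(p := n)) (KK (I - {p}) n)" if "p \<in> I" for p
  proof
    fix k1 k2 assume k1: "k1 \<in> KK (I - {p}) n" and k2: "k2 \<in> KK (I - {p}) n"
      and eq: "k1(p := n) = k2(p := n)"
    show "k1 = k2"
    proof
      fix x show "k1 x = k2 x"
      proof (cases "x = p")
        case True then have "x \<notin> I - {p}" by simp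
        then show ?thesis using k1 k2 by (simp add: KK_def PiE_def extensional_def)
      next
        case False then show ?thesis using eq by (metis fun_upd_other)
      qed
    qed
  qed
  have finU: "finite (\<Union>p\<in>I. (\<lambda>k. k(p := n)) ` KK (I - {p}) n)"
    using assms fin by blast
  have "PP \<alpha> I (Suc n) = PP \<alpha> I n + (\<Sum>k\<in>(\<Union>p\<in>I. (\<lambda>k. k(p := n)) ` KK (I - {p}) n). \<Prod>i\<in>I. \<alpha> (k i))"
    unfolding PP_def KK_Suc[OF assms]
    by (rule sum.union_disjoint[OF fin[OF assms] finU disj1])
  also have "(\<Sum>k\<in>(\<Union>p\<in>I. (\<lambda>k. k(p := n)) ` KK (I - {p}) n). \<Prod>i\<in>I. \<alpha> (k i))
     = (\<Sum>p\<in>I. \<Sum>k\<in>(\<lambda>k. k(p := n)) ` KK (I - {p}) n. \<Prod>i\<in>I. \<alpha> (k i))"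
    by (rule sum.UNION_disjoint[OF assms]) (use fin assms disj2 in blast)+
  also have "\<dots> = (\<Sum>p\<in>I. \<alpha> n * PP \<alpha> (I - {p}) n)"
  proof (rule sum.cong[OF refl])
    fix p assume p: "p \<in> I"
    have "(\<Sum>k\<in>(\<lambda>k. k(p := n)) ` KK (I - {p}) n. \<Prod>i\<in>I. \<alpha> (k i))
        = (\<Sum>k\<in>KK (I - {p}) n. \<Prod>i\<in>I. \<alpha> ((k(p := n)) i))"
      by (subst sum.reindex[OF inj[OF p]]) (simp add: o_def)
    also have "\<dots> = (\<Sum>k\<in>KK (I - {p}) n. \<alpha> n * (\<Prod>i\<in>I - {p}. \<alpha> (k i)))"
    proof (rule sum.cong[OF refl])
      fix k
      have "(\<Prod>i\<in>I. \<alpha> ((k(p := n)) i)) = \<alpha> ((k(p := n)) p) * (\<Prod>i\<in>I - {p}. \<alpha> ((k(p := n)) i))"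
        by (rule prod.remove[OF assms p])
      also have "(\<Prod>i\<in>I - {p}. \<alpha> ((k(p := n)) i)) = (\<Prod>i\<in>I - {p}. \<alpha> (k i))"
        by (rule prod.cong) auto
      finally show "(\<Prod>i\<in>I. \<alpha> ((k(p := n)) i)) = \<alpha> n * (\<Prod>i\<in>I - {p}. \<alpha> (k i))" by simp
    qed
    finally show "(\<Sum>k\<in>(\<lambda>k. k(p := n)) ` KK (I - {p}) n. \<Prod>i\<in>I. \<alpha> (k i)) = \<alpha> n * PP \<alpha> (I - {p}) n"
      unfolding PP_def by (simp add: sum_distrib_left)
  qed
  finally show ?thesis by (simp add: sum_distrib_left)
qed

lemma PP_empty: "PP \<alpha> {} n = 1"
  unfolding PP_def KK_def by simp

lemma PP_bound:
  assumes "\<And>c. \<alpha> c \<ge> 0" "finite I"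
  shows "PP \<alpha> I n \<le> ff n (card I) * ((\<Sum>c<n. \<alpha> c) / real n) ^ card I"
  using assms(2)
proof (induction n arbitrary: I)
  case 0
  show ?case
  proof (cases "I = {}")
    case True then show ?thesis by (simp add: PP_empty ff_def)
  next
    case False
    then have "KK I 0 = {}" unfolding KK_def by auto
    then show ?thesis using ff_nonneg by (simp add: PP_def)
  qed
next
  case (Suc n)
  show ?case
  proof (cases "I = {}")
    case True then show ?thesis by (simp add: PP_empty ff_def)
  next
    case False
    then obtain k where ck: "card I = Suc k" using Suc.prems by (metis card_0_eq not0_implies_Suc)
    define t where "t = (\<Sum>c<n. \<alpha> c) / real n"
    have t0: "t \<ge> 0" unfolding t_def using assms(1) by (intro divide_nonneg_nonneg sum_nonneg) auto
    have st: "(\<Sum>c<n. \<alpha> c) = real n * t" unfolding t_def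
      by (cases "n = 0") auto
    have "PP \<alpha> I (Suc n) = PP \<alpha> I n + \<alpha> n * (\<Sum>p\<in>I. PP \<alpha> (I - {p}) n)"
      by (rule PP_Suc[OF Suc.prems])
    also have "\<dots> \<le> ff n (Suc k) * t ^ Suc k + \<alpha> n * (\<Sum>p\<in>I. ff n k * t ^ k)"
    proof (intro add_mono mult_left_mono sum_mono assms(1))
      show "PP \<alpha> I n \<le> ff n (Suc k) * t ^ Suc k" using Suc.IH[OF Suc.prems] ck t_def by simp
      fix p assume "p \<in> I"
      then have "card (I - {p}) = k" using ck Suc.prems by simp
      then show "PP \<alpha> (I - {p}) n \<le> ff n k * t ^ k" using Suc.IH[of "I - {p}"] Suc.prems t_def by simp
    qed
    also have "\<dots> = ff n (Suc k) * t ^ Suc k + \<alpha> n * real (Suc k) * (ff n k * t ^ k)"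
      using ck by simp
    also have "\<dots> \<le> ff (Suc n) (Suc k) * ((real n * t + \<alpha> n) / (real n + 1)) ^ Suc k"
      by (rule step_ineq[OF t0 assms(1)])
    also have "(real n * t + \<alpha> n) / (real n + 1) = (\<Sum>c<Suc n. \<alpha> c) / real (Suc n)"
      using st by simp
    finally show ?thesis using ck by simp
  qed
qed



definition orthn :: "nat \<Rightarrow> (nat \<Rightarrow> 'a::euclidean_space) \<Rightarrow> bool" where
  "orthn k e \<longleftrightarrow> (\<forall>i<k. \<forall>j<k. e i \<bullet> e j = (if i = j then 1 else 0))"

lemma orthn_expand:
  fixes e :: "nat \<Rightarrow> 'a::euclidean_space"
  assumes "orthn DIM('a) e"
  shows "(\<Sum>c<DIM('a). (x \<bullet> e c) *\<^sub>R e c) = x"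
proof -
  let ?B = "e ` {..<DIM('a)}"
  have inj: "inj_on e {..<DIM('a)}"
  proof
    fix i j assume "i \<in> {..<DIM('a)}" "j \<in> {..<DIM('a)}" "e i = e j"
    then show "i = j" using assms unfolding orthn_def
      by (metis lessThan_iff one_neq_zero)
  qed
  have po: "pairwise orthogonal ?B"
    using assms unfolding orthn_def pairwise_def orthogonal_def by auto
  have n1: "norm i = 1" if "i \<in> ?B" for i
    using assms that unfolding orthn_def by (auto simp: norm_eq_sqrt_inner)
  have z: "0 \<notin> ?B" using n1 by force
  have ind: "independent ?B" by (rule pairwise_orthogonal_independent[OF po z])
  have card: "card ?B = dim (UNIV :: 'a set)" using inj by (simp add: card_image)
  have "UNIV \<subseteq> span ?B" using card_eq_dim[of ?B UNIV] ind card by auto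
  then have "x \<in> span ?B" by auto
  then have "(\<Sum>i\<in>?B. (x \<bullet> i) *\<^sub>R i) = x"
    by (intro orthonormal_basis_expand[OF po n1]) auto
  then show ?thesis by (simp add: sum.reindex[OF inj])
qed

lemma orthn_parseval:
  fixes e :: "nat \<Rightarrow> 'a::euclidean_space"
  assumes "orthn DIM('a) e"
  shows "(\<Sum>c<DIM('a). (v \<bullet> e c) * (w \<bullet> e c)) = v \<bullet> w"
proof -
  have "v \<bullet> w = v \<bullet> (\<Sum>c<DIM('a). (w \<bullet> e c) *\<^sub>R e c)"
    using orthn_expand[OF assms, of w] by simp
  also have "\<dots> = (\<Sum>c<DIM('a). (v \<bullet> e c) * (w \<bullet> e c))"
    by (simp add: inner_sum_right mult.commute)
  finally show ?thesis by simp
qed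

lemma zero_from_quad:
  fixes b C :: real
  assumes "\<And>t. 2 * t * b \<le> t ^ 2 * C"
  shows "b = 0"
proof -
  define K where "K = \<bar>C\<bar> + 1"
  have K: "K > 0" by (simp add: K_def)
  have "2 * (b / K) * b \<le> (b / K) ^ 2 * C" using assms by blast
  then have "2 * b^2 * K \<le> b^2 * C" using K by (simp add: field_simps power2_eq_square)
  also have "\<dots> \<le> b^2 * \<bar>C\<bar>" by (intro mult_left_mono) auto
  finally have "b^2 * (K + (K - \<bar>C\<bar>)) \<le> 0" by (simp add: algebra_simps)
  then have "b^2 \<le> 0" using K by (simp add: K_def mult_le_0_iff)
  then show ?thesis by simp
qed

locale bilin =
  fixes Q :: "'a::euclidean_space \<Rightarrow> 'a \<Rightarrow> real"
  assumes Qsym: "\<And>b c. Q b c = Q c b"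
begin

definition B :: "'a \<Rightarrow> 'a \<Rightarrow> real" where
  "B v w = (\<Sum>b\<in>Basis. \<Sum>c\<in>Basis. (v \<bullet> b) * (w \<bullet> c) * Q b c)"

lemma B_sym: "B v w = B w v"
  unfolding B_def by (subst sum.swap) (simp add: Qsym mult_ac)

lemma B_add_left: "B (x + y) w = B x w + B y w"
  unfolding B_def by (simp add: inner_add_left algebra_simps sum.distrib)

lemma B_scale_left: "B (r *\<^sub>R x) w = r * B x w"
  unfolding B_def by (simp add: sum_distrib_left mult_ac)

lemma B_add_right: "B w (x + y) = B w x + B w y"
  using B_add_left B_sym by metis

lemma B_scale_right: "B w (r *\<^sub>R x) = r * B w x"
  using B_scale_left B_sym by metis

lemma B_zero_right: "B w 0 = 0"
  using B_scale_right[of w 0 0] by simp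

lemma B_cont: "continuous_on S (\<lambda>v. B v v)"
  unfolding B_def by (intro continuous_intros)

lemma B_quad: "B (v + t *\<^sub>R w) (v + t *\<^sub>R w) = B v v + 2 * t * B v w + t^2 * B w w"
  by (simp add: B_add_left B_add_right B_scale_left B_scale_right B_sym[of w v] power2_eq_square algebra_simps)

lemma spectral_aux:
  "k \<le> DIM('a) \<Longrightarrow> \<exists>e. orthn k e \<and>
     (\<forall>j<k. \<forall>w. (\<forall>i\<le>j. w \<bullet> e i = 0) \<longrightarrow> B (e j) w = 0)"
proof (induction k)
  case 0 then show ?case by (simp add: orthn_def)
next
  case (Suc k)
  then obtain e where e: "orthn k e" and inv: "\<forall>j<k. \<forall>w. (\<forall>i\<le>j. w \<bullet> e i = 0) \<longrightarrow> B (e j) w = 0"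
    by auto
  define S where "S = sphere (0::'a) 1 \<inter> (\<Inter>i\<in>{..<k}. {v. e i \<bullet> v = 0})"
  have cS: "compact S" unfolding S_def
    by (intro compact_Int_closed compact_sphere closed_INT) (auto simp: closed_hyperplane)
  have nS: "S \<noteq> {}"
  proof -
    have "dim (e ` {..<k}) \<le> card (e ` {..<k})" by (rule dim_le_card') auto
    also have "\<dots> \<le> k" using card_image_le[of "{..<k}" e] by simp
    also have "k < DIM('a)" using Suc.prems by simp
    finally have "dim (e ` {..<k}) < DIM('a)" .
    then obtain x :: 'a where x: "x \<noteq> 0" "\<And>y. y \<in> span (e ` {..<k}) \<Longrightarrow> orthogonal x y"
      using orthogonal_to_subspace_exists by blast
    have xo: "x \<bullet> e i = 0" if "i < k" for i
      using x(2)[of "e i"] that by (auto simp: orthogonal_def span_base)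
    have "x /\<^sub>R norm x \<in> S" unfolding S_def using x xo
      by (auto simp: inner_commute)
    then show ?thesis by auto
  qed
  obtain v0 where v0: "v0 \<in> S" and vmax0: "\<forall>y\<in>S. B y y \<le> B v0 v0"
    using continuous_attains_sup[OF cS nS B_cont] by blast
  have vmax: "\<And>y. y \<in> S \<Longrightarrow> B y y \<le> B v0 v0" using vmax0 by blast
  define lam where "lam = B v0 v0"
  have v0n: "v0 \<bullet> v0 = 1" using v0 by (simp add: S_def dot_square_norm)
  have v0o: "\<And>i. i < k \<Longrightarrow> e i \<bullet> v0 = 0" using v0 by (simp add: S_def)
  have bound: "B y y \<le> lam * (y \<bullet> y)" if "\<And>i. i < k \<Longrightarrow> e i \<bullet> y = 0" for y
  proof (cases "y = 0")
    case True then show ?thesis by (simp add: B_zero_right)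
  next
    case False
    have "y /\<^sub>R norm y \<in> S" unfolding S_def using that False by auto
    then have "B (y /\<^sub>R norm y) (y /\<^sub>R norm y) \<le> lam" using vmax lam_def by blast
    then have "B y y / (norm y)^2 \<le> lam"
      by (simp add: B_scale_left B_scale_right power2_eq_square divide_inverse mult_ac)
    then show ?thesis using False by (simp add: divide_le_eq dot_square_norm mult.commute)
  qed
  define e' where "e' = e(k := v0)"
  have "orthn (Suc k) e'"
    using e v0n v0o unfolding orthn_def e'_def by (auto simp: less_Suc_eq inner_commute)
  moreover have "\<forall>j<Suc k. \<forall>w. (\<forall>i\<le>j. w \<bullet> e' i = 0) \<longrightarrow> B (e' j) w = 0"
  proof (intro allI impI)
    fix j w assume j: "j < Suc k" and w: "\<forall>i\<le>j. w \<bullet> e' i = 0"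
    show "B (e' j) w = 0"
    proof (cases "j < k")
      case True
      then have "\<forall>i\<le>j. w \<bullet> e i = 0" using w by (auto simp: e'_def)
      then show ?thesis using inv True by (simp add: e'_def)
    next
      case False
      then have jk: "j = k" using j by simp
      have wo: "e i \<bullet> w = 0" if "i < k" for i
      proof -
        have "w \<bullet> e' i = 0" using w jk that by simp
        then show ?thesis using that by (simp add: e'_def inner_commute)
      qed
      have wv: "w \<bullet> v0 = 0" using w jk by (auto simp: e'_def)
      have "2 * t * B v0 w \<le> t ^ 2 * (lam * (w \<bullet> w) - B w w)" for t
      proof -
        have "B (v0 + t *\<^sub>R w) (v0 + t *\<^sub>R w) \<le> lam * ((v0 + t *\<^sub>R w) \<bullet> (v0 + t *\<^sub>R w))"
          by (rule bound) (simp add: inner_add_right v0o wo)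
        also have "(v0 + t *\<^sub>R w) \<bullet> (v0 + t *\<^sub>R w) = 1 + t^2 * (w \<bullet> w)"
          using v0n wv by (simp add: inner_add_left inner_add_right inner_commute power2_eq_square)
        finally show ?thesis unfolding B_quad lam_def by (simp add: algebra_simps)
      qed
      then have "B v0 w = 0" by (rule zero_from_quad)
      then show ?thesis by (simp add: e'_def jk)
    qed
  qed
  ultimately show ?case by blast
qed

lemma spectral:
  "\<exists>e. orthn DIM('a) e \<and> (\<forall>i<DIM('a). \<forall>j<DIM('a). i \<noteq> j \<longrightarrow> B (e i) (e j) = 0)"
proof -
  obtain e where e: "orthn DIM('a) e"
    and inv: "\<forall>j<DIM('a). \<forall>w. (\<forall>i\<le>j. w \<bullet> e i = 0) \<longrightarrow> B (e j) w = 0"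
    using spectral_aux[of "DIM('a)"] by auto
  have "B (e i) (e j) = 0" if "i < DIM('a)" "j < DIM('a)" "i \<noteq> j" for i j
  proof (cases "i < j")
    case True
    have "\<forall>i'\<le>i. e j \<bullet> e i' = 0" using e True that unfolding orthn_def by auto
    then show ?thesis using inv that by blast
  next
    case False
    then have "j < i" using that by simp
    then have "\<forall>i'\<le>j. e i \<bullet> e i' = 0" using e that unfolding orthn_def by auto
    then have "B (e j) (e i) = 0" using inv that by blast
    then show ?thesis by (simp add: B_sym)
  qed
  then show ?thesis using e by blast
qed

end



lemma dt_sq: "(dt n X)^2 = (\<Sum>\<sigma>\<in>{p. p permutes {..<n}}. \<Sum>\<tau>\<in>{p. p permutes {..<n}}.
   real_of_int (sign \<sigma>) * real_of_int (sign \<tau>) * (\<Prod>i<n. X i (\<sigma> i) * X i (\<tau> i)))"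
  unfolding dt_def power2_eq_square sum_product
  by (intro sum.cong refl) (simp add: prod.distrib mult_ac)

lemma reindex_perm:
  assumes "\<sigma> permutes {..<n}"
  shows "(\<Prod>i<n. h (\<sigma> i) i) = (\<Prod>j<n. h j (inv \<sigma> j))"
  using prod.permute[OF assms, of "\<lambda>j. h j (inv \<sigma> j)"] permutes_inverses(2)[OF assms]
  by (simp add: o_def)

lemma perm_diff:
  assumes "\<sigma> permutes {..<n}" "\<tau> permutes {..<n}" "\<sigma> \<noteq> \<tau>"
  shows "\<exists>i<n. \<sigma> i \<noteq> \<tau> i"
proof (rule ccontr)
  assume "\<not> ?thesis"
  then have "\<sigma> x = \<tau> x" for x
    using assms(1,2) by (cases "x < n") (auto simp: permutes_def)
  then show False using assms(3) by auto
qed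

locale sph =
  fixes M :: "'a::euclidean_space measure"
  assumes sets_M: "sets M = sets (restrict_space borel (sphere (0::'a) 1))"
    and probM: "prob_space M"
begin

lemma space_M: "space M = sphere 0 1"
  using sets_eq_imp_space_eq[OF sets_M] by (simp add: space_restrict_space)

lemma meas_inner[measurable]: "(\<lambda>x. x \<bullet> w) \<in> borel_measurable M"
proof -
  have "(\<lambda>x. x \<bullet> w) \<in> borel_measurable (restrict_space borel (sphere (0::'a) 1))"
    by (intro measurable_restrict_space1) simp
  moreover have "measurable M (borel::real measure) = measurable (restrict_space borel (sphere (0::'a) 1)) borel"
    by (rule measurable_cong_sets[OF sets_M refl])
  ultimately show ?thesis by simp
qed

lemma int_bounded:
  fixes f :: "'a \<Rightarrow> real"
  assumes "f \<in> borel_measurable M" "\<And>x. x \<in> space M \<Longrightarrow> \<bar>f x\<bar> \<le> C"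
  shows "integrable M f"
proof -
  interpret prob_space M by (rule probM)
  show ?thesis by (rule integrable_const_bound[where B = C]) (use assms in auto)
qed

lemma inner_le1: "x \<in> space M \<Longrightarrow> norm w = 1 \<Longrightarrow> \<bar>x \<bullet> w\<bar> \<le> 1"
  using Cauchy_Schwarz_ineq2[of x w] by (simp add: space_M)

lemma int_inner2: "norm v = 1 \<Longrightarrow> norm w = 1 \<Longrightarrow> integrable M (\<lambda>x. (x \<bullet> v) * (x \<bullet> w))"
  by (rule int_bounded[where C = 1]) (auto simp: abs_mult intro!: mult_le_one inner_le1)

definition Q :: "'a \<Rightarrow> 'a \<Rightarrow> real" where
  "Q b c = (\<integral>x. (x \<bullet> b) * (x \<bullet> c) \<partial>M)"

lemma bilin_Q: "bilin Q"
  by unfold_locales (simp add: Q_def mult.commute)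

lemma int_B: "(\<integral>x. (x \<bullet> v) * (x \<bullet> w) \<partial>M) = bilin.B Q v w"
proof -
  have eq: "(x \<bullet> v) * (x \<bullet> w) = (\<Sum>b\<in>Basis. \<Sum>c\<in>Basis. (v \<bullet> b) * (w \<bullet> c) * ((x \<bullet> b) * (x \<bullet> c)))" for x
    by (simp add: euclidean_inner[of x v] euclidean_inner[of x w] sum_product mult_ac)
  have ii: "integrable M (\<lambda>x. (v \<bullet> b) * (w \<bullet> c) * ((x \<bullet> b) * (x \<bullet> c)))"
    if "b \<in> Basis" "c \<in> Basis" for b c
    using that by (intro integrable_mult_right int_inner2) auto
  have "(\<integral>x. (x \<bullet> v) * (x \<bullet> w) \<partial>M)
      = (\<integral>x. (\<Sum>b\<in>Basis. \<Sum>c\<in>Basis. (v \<bullet> b) * (w \<bullet> c) * ((x \<bullet> b) * (x \<bullet> c))) \<partial>M)"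
    unfolding eq ..
  also have "\<dots> = (\<Sum>b\<in>Basis. (\<integral>x. (\<Sum>c\<in>Basis. (v \<bullet> b) * (w \<bullet> c) * ((x \<bullet> b) * (x \<bullet> c))) \<partial>M))"
    by (rule Bochner_Integration.integral_sum[where f="\<lambda>b x. (\<Sum>c\<in>Basis. (v \<bullet> b) * (w \<bullet> c) * ((x \<bullet> b) * (x \<bullet> c)))"])
       (use ii in \<open>auto intro!: integrable_sum\<close>)
  also have "\<dots> = (\<Sum>b\<in>Basis. \<Sum>c\<in>Basis. (\<integral>x. (v \<bullet> b) * (w \<bullet> c) * ((x \<bullet> b) * (x \<bullet> c)) \<partial>M))"
    by (intro sum.cong refl Bochner_Integration.integral_sum[where f="\<lambda>c x. (v \<bullet> b) * (w \<bullet> c) * ((x \<bullet> b) * (x \<bullet> c))" for b]) (use ii in auto)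
  also have "\<dots> = (\<Sum>b\<in>Basis. \<Sum>c\<in>Basis. (v \<bullet> b) * (w \<bullet> c) * Q b c)"
    unfolding Q_def by simp
  finally have "(\<integral>x. (x \<bullet> v) * (x \<bullet> w) \<partial>M) = (\<Sum>b\<in>Basis. \<Sum>c\<in>Basis. (v \<bullet> b) * (w \<bullet> c) * Q b c)" .
  then show ?thesis by (simp add: bilin.B_def[OF bilin_Q])
qed


definition E :: "nat \<Rightarrow> 'a" where
  "E = (SOME e. orthn DIM('a) e \<and> (\<forall>i<DIM('a). \<forall>j<DIM('a). i \<noteq> j \<longrightarrow> bilin.B Q (e i) (e j) = 0))"

lemma E_prop: "orthn DIM('a) E \<and> (\<forall>i<DIM('a). \<forall>j<DIM('a). i \<noteq> j \<longrightarrow> bilin.B Q (E i) (E j) = 0)"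
proof -
  have "\<exists>e. orthn DIM('a) e \<and> (\<forall>i<DIM('a). \<forall>j<DIM('a). i \<noteq> j \<longrightarrow> bilin.B Q (e i) (e j) = 0)"
    by (rule bilin.spectral[OF bilin_Q])
  then show ?thesis unfolding E_def by (rule someI_ex)
qed

lemma E_orth: "orthn DIM('a) E" using E_prop by blast

lemma E_norm: "c < DIM('a) \<Longrightarrow> norm (E c) = 1"
  using E_orth by (simp add: orthn_def norm_eq_sqrt_inner)

definition alpha :: "nat \<Rightarrow> real" where "alpha c = bilin.B Q (E c) (E c)"

lemma BE: "a < DIM('a) \<Longrightarrow> b < DIM('a) \<Longrightarrow> bilin.B Q (E a) (E b) = (if a = b then alpha a else 0)"
  using E_prop by (auto simp: alpha_def)

lemma alpha_int: "alpha c = (\<integral>x. (x \<bullet> E c) * (x \<bullet> E c) \<partial>M)"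
  by (simp add: alpha_def int_B)

lemma alpha_nonneg: "alpha c \<ge> 0"
  unfolding alpha_int by (intro Bochner_Integration.integral_nonneg) (simp add: zero_le_square)

lemma alpha_sum: "(\<Sum>c<DIM('a). alpha c) = 1"
proof -
  interpret prob_space M by (rule probM)
  have "(\<Sum>c<DIM('a). alpha c) = (\<integral>x. (\<Sum>c<DIM('a). (x \<bullet> E c) * (x \<bullet> E c)) \<partial>M)"
    unfolding alpha_int
    by (rule Bochner_Integration.integral_sum[symmetric]) (auto intro!: int_inner2 E_norm)
  also have "\<dots> = (\<integral>x. 1 \<partial>M)"
  proof (rule Bochner_Integration.integral_cong[OF refl])
    fix x assume "x \<in> space M"
    then have "norm x = 1" by (simp add: space_M)
    then show "(\<Sum>c<DIM('a). (x \<bullet> E c) * (x \<bullet> E c)) = 1"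
      using orthn_parseval[OF E_orth, of x x] by (simp add: dot_square_norm)
  qed
  also have "\<dots> = 1" by (simp add: prob_space)
  finally show ?thesis .
qed

lemma PS: "product_sigma_finite (\<lambda>_::nat. M)"
  unfolding product_sigma_finite_def using probM prob_space_imp_sigma_finite by blast

definition D :: "nat \<Rightarrow> (nat \<Rightarrow> nat) \<Rightarrow> (nat \<Rightarrow> 'a) \<Rightarrow> real" where
  "D l k u = dt l (\<lambda>i j. u j \<bullet> E (k i))"

definition Tf :: "(nat \<Rightarrow> nat) \<Rightarrow> (nat \<Rightarrow> nat) \<Rightarrow> (nat \<Rightarrow> nat) \<Rightarrow> nat \<Rightarrow> 'a \<Rightarrow> real" where
  "Tf k \<sigma> \<tau> j v = (v \<bullet> E (k (inv \<sigma> j))) * (v \<bullet> E (k (inv \<tau> j)))"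

lemma D_sq: "(D l k u)^2 = (\<Sum>\<sigma>\<in>{p. p permutes {..<l}}. \<Sum>\<tau>\<in>{p. p permutes {..<l}}.
   real_of_int (sign \<sigma>) * real_of_int (sign \<tau>) * (\<Prod>j<l. Tf k \<sigma> \<tau> j (u j)))"
  unfolding D_def dt_sq
proof (intro sum.cong refl)
  fix \<sigma> \<tau> assume s: "\<sigma> \<in> {p. p permutes {..<l}}" and t: "\<tau> \<in> {p. p permutes {..<l}}"
  have "(\<Prod>i<l. (u (\<sigma> i) \<bullet> E (k i)) * (u (\<tau> i) \<bullet> E (k i)))
      = (\<Prod>i<l. u (\<sigma> i) \<bullet> E (k i)) * (\<Prod>i<l. u (\<tau> i) \<bullet> E (k i))"
    by (rule prod.distrib)
  also have "\<dots> = (\<Prod>j<l. u j \<bullet> E (k (inv \<sigma> j))) * (\<Prod>j<l. u j \<bullet> E (k (inv \<tau> j)))"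
    using reindex_perm[of \<sigma> l "\<lambda>a i. u a \<bullet> E (k i)"] reindex_perm[of \<tau> l "\<lambda>a i. u a \<bullet> E (k i)"] s t
    by simp
  also have "\<dots> = (\<Prod>j<l. Tf k \<sigma> \<tau> j (u j))"
    unfolding Tf_def by (rule prod.distrib[symmetric])
  finally show "real_of_int (sign \<sigma>) * real_of_int (sign \<tau>) * (\<Prod>i<l. (u (\<sigma> i) \<bullet> E (k i)) * (u (\<tau> i) \<bullet> E (k i)))
     = real_of_int (sign \<sigma>) * real_of_int (sign \<tau>) * (\<Prod>j<l. Tf k \<sigma> \<tau> j (u j))" by simp
qed

lemma Tf_int:
  assumes "k \<in> PiE {..<l} (\<lambda>_. {..<DIM('a)})" "\<sigma> permutes {..<l}" "\<tau> permutes {..<l}" "j < l"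
  shows "integrable M (Tf k \<sigma> \<tau> j)"
proof -
  have "inv \<sigma> j < l" "inv \<tau> j < l"
    using assms permutes_in_image[OF permutes_inv[OF assms(2)]] permutes_in_image[OF permutes_inv[OF assms(3)]]
    by auto
  then have "k (inv \<sigma> j) < DIM('a)" "k (inv \<tau> j) < DIM('a)" using assms(1) by (auto simp: PiE_iff)
  then show ?thesis unfolding Tf_def by (intro int_inner2 E_norm)
qed

lemma T_int:
  assumes "k \<in> PiE {..<l} (\<lambda>_. {..<DIM('a)})" "\<sigma> permutes {..<l}" "\<tau> permutes {..<l}"
  shows "integrable (PiM {..<l} (\<lambda>_. M)) (\<lambda>u. \<Prod>j<l. Tf k \<sigma> \<tau> j (u j))"
  by (rule product_sigma_finite.product_integrable_prod[OF PS]) (use Tf_int[OF assms] in auto)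

lemma Tf_integral: "integral\<^sup>L M (Tf k \<sigma> \<tau> j) = bilin.B Q (E (k (inv \<sigma> j))) (E (k (inv \<tau> j)))"
proof -
  have "Tf k \<sigma> \<tau> j = (\<lambda>v. (v \<bullet> E (k (inv \<sigma> j))) * (v \<bullet> E (k (inv \<tau> j))))"
    by (rule ext) (simp add: Tf_def)
  then show ?thesis by (simp add: int_B)
qed

lemma T_integral:
  assumes "k \<in> PiE {..<l} (\<lambda>_. {..<DIM('a)})" "\<sigma> permutes {..<l}" "\<tau> permutes {..<l}"
  shows "(\<integral>u. (\<Prod>j<l. Tf k \<sigma> \<tau> j (u j)) \<partial>PiM {..<l} (\<lambda>_. M))
    = (\<Prod>j<l. bilin.B Q (E (k (inv \<sigma> j))) (E (k (inv \<tau> j))))"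
  by (subst product_sigma_finite.product_integral_prod[OF PS])
     (use Tf_int[OF assms] in \<open>auto simp: Tf_integral\<close>)

lemma D_sq_int:
  assumes "k \<in> PiE {..<l} (\<lambda>_. {..<DIM('a)})"
  shows "integrable (PiM {..<l} (\<lambda>_. M)) (\<lambda>u. (D l k u)^2)"
  unfolding D_sq by (intro Bochner_Integration.integrable_sum integrable_mult_right T_int[OF assms]) auto


lemma sgn_sq: "real_of_int (sign (p::nat\<Rightarrow>nat)) * real_of_int (sign p) = 1"
  by (metis of_int_mult sign_idempotent of_int_1)

lemma D_sq_integral:
  assumes k: "k \<in> PiE {..<l} (\<lambda>_. {..<DIM('a)})" and inj: "inj_on k {..<l}"
  shows "(\<integral>u. (D l k u)^2 \<partial>PiM {..<l} (\<lambda>_. M)) = fact l * (\<Prod>i<l. alpha (k i))"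
proof -
  let ?P = "{p. p permutes {..<l}}"
  let ?N = "PiM {..<l} (\<lambda>_. M)"
  let ?c = "\<lambda>\<sigma> \<tau>. real_of_int (sign \<sigma>) * real_of_int (sign \<tau>)"
  let ?T = "\<lambda>\<sigma> \<tau> u. \<Prod>j<l. Tf k \<sigma> \<tau> j (u j)"
  have val: "(\<Prod>j<l. bilin.B Q (E (k (inv \<sigma> j))) (E (k (inv \<tau> j)))) = (if \<sigma> = \<tau> then (\<Prod>i<l. alpha (k i)) else 0)"
    if s: "\<sigma> permutes {..<l}" and t: "\<tau> permutes {..<l}" for \<sigma> \<tau>
  proof (cases "\<sigma> = \<tau>")
    case True
    have "(\<Prod>j<l. bilin.B Q (E (k (inv \<sigma> j))) (E (k (inv \<sigma> j)))) = (\<Prod>j<l. alpha (k (inv \<sigma> j)))"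
      by (simp add: alpha_def)
    also have "\<dots> = (\<Prod>i<l. alpha (k i))"
      using prod.permute[OF permutes_inv[OF s], of "\<lambda>i. alpha (k i)"] by (simp add: o_def)
    finally show ?thesis using True by simp
  next
    case False
    have "inv \<sigma> \<noteq> inv \<tau>"
    proof
      assume "inv \<sigma> = inv \<tau>"
      then have "inv (inv \<sigma>) = inv (inv \<tau>)" by simp
      then show False using False permutes_inv_inv[OF s] permutes_inv_inv[OF t] by simp
    qed
    then obtain j where j: "j < l" "inv \<sigma> j \<noteq> inv \<tau> j"
      using perm_diff[OF permutes_inv[OF s] permutes_inv[OF t]] by blast
    have a: "inv \<sigma> j < l" "inv \<tau> j < l"
      using j permutes_in_image[OF permutes_inv[OF s]] permutes_in_image[OF permutes_inv[OF t]] by auto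
    then have "k (inv \<sigma> j) \<noteq> k (inv \<tau> j)" using inj j(2) by (auto simp: inj_on_def)
    moreover have "k (inv \<sigma> j) < DIM('a)" "k (inv \<tau> j) < DIM('a)" using a k by (auto simp: PiE_iff)
    ultimately have "bilin.B Q (E (k (inv \<sigma> j))) (E (k (inv \<tau> j))) = 0" by (simp add: BE)
    then have "(\<Prod>j<l. bilin.B Q (E (k (inv \<sigma> j))) (E (k (inv \<tau> j)))) = 0"
      using j(1) by (intro prod_zero) auto
    then show ?thesis using False by simp
  qed
  have ii: "integrable ?N (\<lambda>u. ?c \<sigma> \<tau> * ?T \<sigma> \<tau> u)" if "\<sigma> \<in> ?P" "\<tau> \<in> ?P" for \<sigma> \<tau>
    using that by (intro integrable_mult_right T_int[OF k]) auto
  have "(\<integral>u. (D l k u)^2 \<partial>?N) = (\<integral>u. (\<Sum>\<sigma>\<in>?P. \<Sum>\<tau>\<in>?P. ?c \<sigma> \<tau> * ?T \<sigma> \<tau> u) \<partial>?N)"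
    unfolding D_sq ..
  also have "\<dots> = (\<Sum>\<sigma>\<in>?P. (\<integral>u. (\<Sum>\<tau>\<in>?P. ?c \<sigma> \<tau> * ?T \<sigma> \<tau> u) \<partial>?N))"
    by (rule Bochner_Integration.integral_sum[where f="\<lambda>\<sigma> u. (\<Sum>\<tau>\<in>?P. ?c \<sigma> \<tau> * ?T \<sigma> \<tau> u)"])
       (use ii in \<open>auto intro!: Bochner_Integration.integrable_sum\<close>)
  also have "\<dots> = (\<Sum>\<sigma>\<in>?P. \<Sum>\<tau>\<in>?P. (\<integral>u. ?c \<sigma> \<tau> * ?T \<sigma> \<tau> u \<partial>?N))"
    by (intro sum.cong refl Bochner_Integration.integral_sum[where f="\<lambda>\<tau> u. ?c \<sigma> \<tau> * ?T \<sigma> \<tau> u" for \<sigma>])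
       (use ii in auto)
  also have "\<dots> = (\<Sum>\<sigma>\<in>?P. \<Sum>\<tau>\<in>?P. (if \<sigma> = \<tau> then ?c \<sigma> \<sigma> * (\<Prod>i<l. alpha (k i)) else 0))"
    by (intro sum.cong refl) (simp add: T_integral[OF k] val)
  also have "\<dots> = (\<Sum>\<sigma>\<in>?P. (\<Prod>i<l. alpha (k i)))"
    by (intro sum.cong refl) (simp add: sgn_sq finite_permutations)
  also have "\<dots> = fact l * (\<Prod>i<l. alpha (k i))"
    by (simp add: card_permutations)
  finally show ?thesis .
qed

lemma G_integral:
  "(\<integral>u. (\<Sum>k\<in>PiE {..<l} (\<lambda>_. {..<DIM('a)}). (D l k u)^2) \<partial>PiM {..<l} (\<lambda>_. M))
     = fact l * PP alpha {..<l} DIM('a)"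
proof -
  let ?K = "PiE {..<l} (\<lambda>_. {..<DIM('a)})"
  have "(\<integral>u. (\<Sum>k\<in>?K. (D l k u)^2) \<partial>PiM {..<l} (\<lambda>_. M))
      = (\<Sum>k\<in>?K. (\<integral>u. (D l k u)^2 \<partial>PiM {..<l} (\<lambda>_. M)))"
    by (rule Bochner_Integration.integral_sum[where f = "\<lambda>k u. (D l k u)^2"]) (use D_sq_int in auto)
  also have "\<dots> = (\<Sum>k\<in>?K. if inj_on k {..<l} then fact l * (\<Prod>i<l. alpha (k i)) else 0)"
  proof (rule sum.cong[OF refl])
    fix k assume k: "k \<in> ?K"
    show "(\<integral>u. (D l k u)^2 \<partial>PiM {..<l} (\<lambda>_. M)) = (if inj_on k {..<l} then fact l * (\<Prod>i<l. alpha (k i)) else 0)"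
    proof (cases "inj_on k {..<l}")
      case True then show ?thesis using D_sq_integral[OF k] by simp
    next
      case False
      then obtain a b where ab: "a < l" "b < l" "a \<noteq> b" "k a = k b" by (auto simp: inj_on_def)
      then have "D l k u = 0" for u unfolding D_def by (intro dt_identical_rows[of a l b]) auto
      then show ?thesis using False by simp
    qed
  qed
  also have "\<dots> = (\<Sum>k\<in>{k\<in>?K. inj_on k {..<l}}. fact l * (\<Prod>i<l. alpha (k i)))"
    by (rule sum.inter_filter[symmetric]) (intro finite_PiE; simp)
  also have "\<dots> = fact l * (\<Sum>k\<in>{k\<in>?K. inj_on k {..<l}}. \<Prod>i<l. alpha (k i))"
    by (rule sum_distrib_left[symmetric])
  finally show ?thesis unfolding PP_def KK_def .
qed

lemma G_orth:
  assumes u: "u \<in> space (PiM {..<l} (\<lambda>_. M))" and orth: "\<forall>i<l. \<forall>j<l. i \<noteq> j \<longrightarrow> u i \<bullet> u j = 0"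
  shows "(\<Sum>k\<in>PiE {..<l} (\<lambda>_. {..<DIM('a)}). (D l k u)^2) = fact l"
proof -
  let ?P = "{p. p permutes {..<l}}"
  let ?K = "PiE {..<l} (\<lambda>_. {..<DIM('a)})"
  let ?c = "\<lambda>\<sigma> \<tau>. real_of_int (sign \<sigma>) * real_of_int (sign \<tau>)"
  have uu: "u i \<bullet> u j = (if i = j then 1 else 0)" if "i < l" "j < l" for i j
  proof -
    have "u i \<in> space M" using u that by (auto simp: space_PiM PiE_iff)
    then show ?thesis using orth that by (auto simp: space_M dot_square_norm)
  qed
  have "(\<Sum>k\<in>?K. (D l k u)^2) = (\<Sum>k\<in>?K. \<Sum>\<sigma>\<in>?P. \<Sum>\<tau>\<in>?P. ?c \<sigma> \<tau> * (\<Prod>i<l. (u (\<sigma> i) \<bullet> E (k i)) * (u (\<tau> i) \<bullet> E (k i))))"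
    unfolding D_def dt_sq ..
  also have "\<dots> = (\<Sum>\<sigma>\<in>?P. \<Sum>k\<in>?K. \<Sum>\<tau>\<in>?P. ?c \<sigma> \<tau> * (\<Prod>i<l. (u (\<sigma> i) \<bullet> E (k i)) * (u (\<tau> i) \<bullet> E (k i))))"
    by (rule sum.swap)
  also have "\<dots> = (\<Sum>\<sigma>\<in>?P. \<Sum>\<tau>\<in>?P. \<Sum>k\<in>?K. ?c \<sigma> \<tau> * (\<Prod>i<l. (u (\<sigma> i) \<bullet> E (k i)) * (u (\<tau> i) \<bullet> E (k i))))"
    by (intro sum.cong refl sum.swap)
  also have "\<dots> = (\<Sum>\<sigma>\<in>?P. \<Sum>\<tau>\<in>?P. ?c \<sigma> \<tau> * (\<Prod>i<l. u (\<sigma> i) \<bullet> u (\<tau> i)))"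
  proof (intro sum.cong refl)
    fix \<sigma> \<tau>
    have "(\<Sum>k\<in>?K. \<Prod>i<l. (u (\<sigma> i) \<bullet> E (k i)) * (u (\<tau> i) \<bullet> E (k i)))
        = (\<Prod>i<l. \<Sum>c<DIM('a). (u (\<sigma> i) \<bullet> E c) * (u (\<tau> i) \<bullet> E c))"
      by (rule prod_sum_PiE[symmetric]) auto
    also have "\<dots> = (\<Prod>i<l. u (\<sigma> i) \<bullet> u (\<tau> i))"
      by (simp add: orthn_parseval[OF E_orth])
    finally show "(\<Sum>k\<in>?K. ?c \<sigma> \<tau> * (\<Prod>i<l. (u (\<sigma> i) \<bullet> E (k i)) * (u (\<tau> i) \<bullet> E (k i))))
        = ?c \<sigma> \<tau> * (\<Prod>i<l. u (\<sigma> i) \<bullet> u (\<tau> i))"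
      by (simp add: sum_distrib_left[symmetric])
  qed
  also have "\<dots> = (\<Sum>\<sigma>\<in>?P. \<Sum>\<tau>\<in>?P. if \<sigma> = \<tau> then 1 else 0)"
  proof (intro sum.cong refl)
    fix \<sigma> \<tau> assume s: "\<sigma> \<in> ?P" and t: "\<tau> \<in> ?P"
    show "?c \<sigma> \<tau> * (\<Prod>i<l. u (\<sigma> i) \<bullet> u (\<tau> i)) = (if \<sigma> = \<tau> then 1 else 0)"
    proof (cases "\<sigma> = \<tau>")
      case True
      have s': "\<sigma> permutes {..<l}" using s by simp
      have "(\<Prod>i<l. u (\<sigma> i) \<bullet> u (\<sigma> i)) = 1"
        by (intro prod.neutral) (use uu permutes_in_image[OF s'] in auto)
      then show ?thesis using True sgn_sq by simp
    next
      case False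
      then obtain i where i: "i < l" "\<sigma> i \<noteq> \<tau> i" using perm_diff s t by blast
      have s': "\<sigma> permutes {..<l}" "\<tau> permutes {..<l}" using s t by auto
      have "\<sigma> i < l" "\<tau> i < l" using i(1) permutes_in_image[OF s'(1)] permutes_in_image[OF s'(2)] by auto
      then have "u (\<sigma> i) \<bullet> u (\<tau> i) = 0" using uu i(2) by auto
      then have "(\<Prod>i<l. u (\<sigma> i) \<bullet> u (\<tau> i)) = 0" using i(1) by (intro prod_zero) auto
      then show ?thesis using False by simp
    qed
  qed
  also have "\<dots> = card ?P" by (simp add: finite_permutations)
  also have "\<dots> = fact l" by (simp add: card_permutations)
  finally show ?thesis .
qed

end

theorem lemma1:
  fixes M :: "'a::euclidean_space measure" and l :: nat
  assumes "DIM('a) \<ge> 2"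
    and "sets M = sets (restrict_space borel (sphere (0::'a) 1))"
    and "prob_space M"
    and "2 \<le> l" and "l \<le> DIM('a)"
  shows "measure (PiM {..<l} (\<lambda>_. M))
           {u \<in> space (PiM {..<l} (\<lambda>_. M)).
              \<forall>i<l. \<forall>j<l. i \<noteq> j \<longrightarrow> u i \<bullet> u j = 0}
         \<le> fact DIM('a) / (fact (DIM('a) - l) * real DIM('a) ^ l)"
proof -
  interpret sph M by (rule sph.intro[OF assms(2,3)])
  let ?N = "PiM {..<l} (\<lambda>_. M)"
  let ?O = "{u \<in> space ?N. \<forall>i<l. \<forall>j<l. i \<noteq> j \<longrightarrow> u i \<bullet> u j = 0}"
  let ?G = "\<lambda>u. (\<Sum>k\<in>PiE {..<l} (\<lambda>_. {..<DIM('a)}). (D l k u)^2) / fact l"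
  have Gint: "integrable ?N ?G"
    by (intro integrable_divide_zero Bochner_Integration.integrable_sum D_sq_int)
  have Gnn: "0 \<le> ?G u" for u by (intro divide_nonneg_nonneg sum_nonneg) auto
  have "measure ?N ?O = integral\<^sup>L ?N (indicator ?O)"
    by (simp add: Int_absorb2)
  also have "\<dots> \<le> integral\<^sup>L ?N ?G"
  proof (cases "integrable ?N (indicator ?O :: _ \<Rightarrow> real)")
    case True
    show ?thesis
    proof (rule integral_mono[OF True Gint])
      fix u assume u: "u \<in> space ?N"
      show "indicator ?O u \<le> ?G u"
      proof (cases "u \<in> ?O")
        case True then show ?thesis using G_orth[of u l] by simp
      next
        case False then show ?thesis using Gnn[of u] by simp
      qed
    qed
  next
    case False
    then have "integral\<^sup>L ?N (indicator ?O :: _ \<Rightarrow> real) = 0" by (rule not_integrable_integral_eq)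
    moreover have "0 \<le> integral\<^sup>L ?N ?G" by (intro Bochner_Integration.integral_nonneg Gnn)
    ultimately show ?thesis by linarith
  qed
  also have "integral\<^sup>L ?N ?G = PP alpha {..<l} DIM('a)"
    using G_integral[of l] by simp
  also have "\<dots> \<le> ff DIM('a) l * ((\<Sum>c<DIM('a). alpha c) / real DIM('a)) ^ l"
    using PP_bound[of alpha "{..<l}" "DIM('a)", OF alpha_nonneg] by simp
  also have "\<dots> = fact DIM('a) / (fact (DIM('a) - l) * real DIM('a) ^ l)"
    using alpha_sum ff_fact[OF assms(5)] by (simp add: power_divide)
  finally show ?thesis .
qed

end
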